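(* Let $d\ge 2$ and let $W_1,\dots,W_n$ be hyperplanes in $\mathbb R^d$ which do phase retrieval. Then $n\ge 2d-2$. Moreover, if $n=2d-2$ and $W_i^\perp=\operatorname{span}\{\phi_i\}$ for $i=1,\dots,2d-2$, then $\{\phi_i\}_{i=1}^{2d-2}$ is full spark.
   Context: A hyperplane is a subspace of dimension $d-1$. A family of subspaces $\{W_i\}$ with orthogonal projections $P_i$ does phase retrieval if whenever $x,y\in\mathbb R^d$ satisfy $\|P_ix\|=\|P_iy\|$ for all $i$, then $x=\pm y$. A family of vectors in $\mathbb R^d$ is full spark if every subset of $d$ of its vectors is linearly independent. *)

theory Defs
  imports "HOL-Analysis.Analysis"
begin

definition orth_proj :: "('a::real_inner) set \<Rightarrow> 'a \<Rightarrow> 'a" where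
  "orth_proj W x = (THE p. p \<in> W \<and> x - p \<in> orthogonal_comp W)"

definition does_phase_retrieval :: "nat \<Rightarrow> (nat \<Rightarrow> ('a::real_inner) set) \<Rightarrow> bool" where
  "does_phase_retrieval n W \<longleftrightarrow>
     (\<forall>x y. (\<forall>i<n. norm (orth_proj (W i) x) = norm (orth_proj (W i) y)) \<longrightarrow> x = y \<or> x = - y)"

definition hyperplane :: "('a::euclidean_space) set \<Rightarrow> bool" where
  "hyperplane W \<longleftrightarrow> subspace W \<and> dim W = DIM('a) - 1"

definition full_spark :: "nat \<Rightarrow> (nat \<Rightarrow> ('a::euclidean_space)) \<Rightarrow> bool" where
  "full_spark n phi \<longleftrightarrow>
     (\<forall>S. S \<subseteq> {..<n} \<and> card S = DIM('a) \<longrightarrow> inj_on phi S \<and> independent (phi ` S))"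

end

theory Submission
  imports Defs
begin

lemma proj_norm:
  fixes W :: "('a::euclidean_space) set"
  assumes W: "subspace W" and oc: "orthogonal_comp W = span {\<phi>}" and ph: "\<phi> \<noteq> 0"
  shows "(norm (orth_proj W x))^2 = (norm x)^2 - (x \<bullet> \<phi>)^2 / (\<phi> \<bullet> \<phi>)"
proof -
  define c where "c = (x \<bullet> \<phi>) / (\<phi> \<bullet> \<phi>)"
  define p where "p = x - c *\<^sub>R \<phi>"
  have pp: "\<phi> \<bullet> \<phi> \<noteq> 0" using ph by simp
  have WW: "W = orthogonal_comp (span {\<phi>})"
    using orthogonal_comp_self[OF W] oc by simp
  have pW: "p \<in> W"
    unfolding WW orthogonal_comp_def orthogonal_def
    using pp by (auto simp: span_singleton p_def c_def inner_diff_right inner_commute)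
  have xp: "x - p \<in> orthogonal_comp W"
    unfolding oc by (simp add: p_def span_base span_mul)
  have "orth_proj W x = p"
    unfolding orth_proj_def
  proof (rule the_equality)
    show "p \<in> W \<and> x - p \<in> orthogonal_comp W" using pW xp by simp
  next
    fix q assume q: "q \<in> W \<and> x - q \<in> orthogonal_comp W"
    have "p - q \<in> W" using q pW W by (simp add: subspace_diff)
    moreover have "p - q = (x - q) - (x - p)" by simp
    hence "p - q \<in> orthogonal_comp W" using q xp
      by (metis subspace_diff subspace_orthogonal_comp)
    ultimately have "p - q = 0" using orthogonal_Int_0[OF W] by blast
    thus "q = p" by simp
  qed
  moreover have "(norm p)^2 = (norm x)^2 - (x \<bullet> \<phi>)^2 / (\<phi> \<bullet> \<phi>)"
  proof -
    have "(norm p)^2 = p \<bullet> p" by (simp add: power2_norm_eq_inner)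
    also have "\<dots> = x \<bullet> x - 2 * c * (x \<bullet> \<phi>) + c * c * (\<phi> \<bullet> \<phi>)"
      by (simp add: p_def inner_diff_left inner_diff_right inner_commute algebra_simps)
    also have "\<dots> = x \<bullet> x - (x \<bullet> \<phi>)^2 / (\<phi> \<bullet> \<phi>)"
      using pp by (simp add: c_def field_simps power2_eq_square)
    finally show ?thesis by (simp add: power2_norm_eq_inner)
  qed
  ultimately show ?thesis by simp
qed


lemma hyp_phi_nz:
  fixes W :: "(real ^ 'd) set"
  assumes d2: "CARD('d) \<ge> 2" and h: "hyperplane W" and oc: "orthogonal_comp W = span {\<phi>}"
  shows "\<phi> \<noteq> 0"
proof
  assume "\<phi> = 0"
  hence "orthogonal_comp W = {0}" using oc by simp
  hence "W = UNIV" using orthogonal_comp_self[of W] h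
    by (simp add: hyperplane_def)
  thus False using h d2 by (simp add: hyperplane_def)
qed

lemma key:
  fixes W :: "nat \<Rightarrow> (real ^ 'd) set" and \<phi> :: "nat \<Rightarrow> real ^ 'd"
  assumes d2: "CARD('d) \<ge> 2"
    and hyp: "\<forall>i<n. hyperplane (W i)"
    and pr: "does_phase_retrieval n W"
    and oc: "\<forall>i<n. orthogonal_comp (W i) = span {\<phi> i}"
    and A: "dim (\<phi> ` A) < CARD('d)"
    and Bf: "finite B" and Bc: "card B \<le> CARD('d) - 2"
    and cov: "{..<n} \<subseteq> A \<union> B"
  shows False
proof -
  obtain u where u0: "u \<noteq> 0" and uo: "\<And>y. y \<in> span (\<phi> ` A) \<Longrightarrow> orthogonal u y"
    using orthogonal_to_subspace_exists[of "\<phi> ` A"] A by auto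
  have "dim (insert u (\<phi> ` B)) \<le> card (insert u (\<phi> ` B))"
    using Bf by (intro dim_le_card) (auto intro: span_base)
  also have "\<dots> \<le> card B + 1"
    using Bf by (metis Suc_eq_plus1 card_image_le card_insert_if finite_imageI le_SucI not_less_eq_eq)
  finally have "dim (insert u (\<phi> ` B)) < DIM(real ^ 'd)" using Bc d2 by simp
  then obtain v where v0: "v \<noteq> 0" and vo: "\<And>y. y \<in> span (insert u (\<phi> ` B)) \<Longrightarrow> orthogonal v y"
    using orthogonal_to_subspace_exists by blast
  have uv: "u \<bullet> v = 0" using vo[of u] by (simp add: span_base orthogonal_def inner_commute)
  define u' where "u' = u /\<^sub>R norm u"
  define v' where "v' = v /\<^sub>R norm v"
  have nu: "u' \<bullet> u' = 1" using u0 by (simp add: u'_def flip: power2_norm_eq_inner)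
  have nv: "v' \<bullet> v' = 1" using v0 by (simp add: v'_def flip: power2_norm_eq_inner)
  have uv': "u' \<bullet> v' = 0" using uv by (simp add: u'_def v'_def)
  have u'0: "u' \<noteq> 0" and v'0: "v' \<noteq> 0" using nu nv by auto
  define x where "x = u' + v'"
  define y where "y = u' - v'"
  have vu': "v' \<bullet> u' = 0" using uv' by (simp add: inner_commute)
  have xx: "x \<bullet> x = y \<bullet> y"
    unfolding x_def y_def inner_add_left inner_add_right inner_diff_left inner_diff_right
    using uv' vu' by simp
  have sq: "(x \<bullet> \<phi> i)^2 = (y \<bullet> \<phi> i)^2" if "i < n" for i
  proof -
    have "i \<in> A \<or> i \<in> B" using cov that by auto
    thus ?thesis
    proof
      assume "i \<in> A"
      hence "u \<bullet> \<phi> i = 0" using uo[of "\<phi> i"] by (simp add: span_base orthogonal_def)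
      hence "u' \<bullet> \<phi> i = 0" by (simp add: u'_def)
      thus ?thesis by (simp add: x_def y_def inner_add_left inner_diff_left power2_eq_square)
    next
      assume "i \<in> B"
      hence "v \<bullet> \<phi> i = 0" using vo[of "\<phi> i"] by (simp add: span_base orthogonal_def)
      hence "v' \<bullet> \<phi> i = 0" by (simp add: v'_def)
      thus ?thesis by (simp add: x_def y_def inner_add_left inner_diff_left)
    qed
  qed
  have "\<forall>i<n. norm (orth_proj (W i) x) = norm (orth_proj (W i) y)"
  proof (intro allI impI)
    fix i assume i: "i < n"
    have hi: "hyperplane (W i)" using hyp i by blast
    have oci: "orthogonal_comp (W i) = span {\<phi> i}" using oc i by blast
    have sub: "subspace (W i)" using hi by (simp add: hyperplane_def)
    have nz: "\<phi> i \<noteq> 0" using hyp_phi_nz[OF d2 hi oci] .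
    have "(norm (orth_proj (W i) x))^2 = (norm (orth_proj (W i) y))^2"
      using proj_norm[OF sub oci nz] sq[OF i] xx
      by (simp add: power2_norm_eq_inner)
    thus "norm (orth_proj (W i) x) = norm (orth_proj (W i) y)"
      by (simp add: power2_eq_iff_nonneg)
  qed
  hence "x = y \<or> x = - y" using pr by (simp add: does_phase_retrieval_def)
  thus False
  proof
    assume "x = y"
    hence "x - y = 0" by simp
    moreover have "x - y = 2 *\<^sub>R v'" by (simp add: x_def y_def scaleR_2)
    ultimately show False using v'0 by simp
  next
    assume "x = - y"
    hence "x + y = 0" by simp
    moreover have "x + y = 2 *\<^sub>R u'" by (simp add: x_def y_def scaleR_2)
    ultimately show False using u'0 by simp
  qed
qed


lemma hyp_phi_exists:
  fixes W :: "(real ^ 'd) set"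
  assumes h: "hyperplane W" and d2: "CARD('d) \<ge> 2"
  shows "\<exists>\<phi>. orthogonal_comp W = span {\<phi>}"
proof -
  have sW: "subspace W" using h by (simp add: hyperplane_def)
  have eq: "{y \<in> UNIV. \<forall>x \<in> W. orthogonal x y} = orthogonal_comp W"
    by (auto simp: orthogonal_comp_def)
  have "dim (orthogonal_comp W) + dim W = dim (UNIV :: (real^'d) set)"
    using dim_subspace_orthogonal_to_vectors[OF sW subspace_UNIV] eq by simp
  hence d1: "dim (orthogonal_comp W) = 1" using h d2 by (simp add: hyperplane_def)
  obtain B where B: "B \<subseteq> orthogonal_comp W" "independent B"
    "orthogonal_comp W \<subseteq> span B" "card B = dim (orthogonal_comp W)"
    using basis_exists by blast
  then obtain \<phi> where "B = {\<phi>}" using d1 by (metis card_1_singletonE)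
  moreover have "span B = orthogonal_comp W"
    using B by (metis span_subspace subspace_orthogonal_comp)
  ultimately show ?thesis by auto
qed

theorem mainTheorem7:
  fixes W :: "nat \<Rightarrow> (real ^ 'd) set" and n :: nat
  assumes "CARD('d) \<ge> 2"
    and "\<forall>i<n. hyperplane (W i)"
    and "does_phase_retrieval n W"
  shows "n \<ge> 2 * CARD('d) - 2 \<and>
    (n = 2 * CARD('d) - 2 \<longrightarrow>
      (\<forall>phi :: nat \<Rightarrow> real ^ 'd.
         (\<forall>i<n. orthogonal_comp (W i) = span {phi i}) \<longrightarrow> full_spark n phi))"
proof
  note d2 = assms(1) and hyp = assms(2) and pr = assms(3)
  show "n \<ge> 2 * CARD('d) - 2"
  proof (rule ccontr)
    assume nlt: "\<not> n \<ge> 2 * CARD('d) - 2"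
    have "\<forall>i. \<exists>\<phi>. i < n \<longrightarrow> orthogonal_comp (W i) = span {\<phi>}"
      using hyp_phi_exists[OF _ d2] hyp by blast
    then obtain \<phi> where oc: "\<forall>i<n. orthogonal_comp (W i) = span {\<phi> i}"
      by metis
    define A where "A = {..<CARD('d) - 1}"
    define B where "B = {CARD('d) - 1..<n}"
    have "dim (\<phi> ` A) \<le> card (\<phi> ` A)"
      by (intro dim_le_card) (auto simp: A_def intro: span_base)
    also have "\<dots> \<le> card A" unfolding A_def by (rule card_image_le) simp
    also have "\<dots> < CARD('d)" using d2 by (simp add: A_def)
    finally have dA: "dim (\<phi> ` A) < CARD('d)" .
    have cB: "card B \<le> CARD('d) - 2" using nlt by (simp add: B_def)
    have cov: "{..<n} \<subseteq> A \<union> B" by (auto simp: A_def B_def)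
    show False using key[OF d2 hyp pr oc dA _ cB cov] by (simp add: B_def)
  qed
next
  note d2 = assms(1) and hyp = assms(2) and pr = assms(3)
  show "n = 2 * CARD('d) - 2 \<longrightarrow>
      (\<forall>phi :: nat \<Rightarrow> real ^ 'd.
         (\<forall>i<n. orthogonal_comp (W i) = span {phi i}) \<longrightarrow> full_spark n phi)"
  proof (intro impI allI)
    fix phi :: "nat \<Rightarrow> real ^ 'd"
    assume nE: "n = 2 * CARD('d) - 2" and oc: "\<forall>i<n. orthogonal_comp (W i) = span {phi i}"
    show "full_spark n phi" unfolding full_spark_def
    proof (intro allI impI)
      fix S assume S: "S \<subseteq> {..<n} \<and> card S = DIM(real ^ 'd)"
      have fS: "finite S" using S finite_subset by blast
      show "inj_on phi S \<and> independent (phi ` S)"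
      proof (rule ccontr)
        assume bad: "\<not> (inj_on phi S \<and> independent (phi ` S))"
        have le: "dim (phi ` S) \<le> card (phi ` S)"
          using fS by (intro dim_le_card) (auto intro: span_base)
        have "dim (phi ` S) < CARD('d)"
        proof (cases "inj_on phi S")
          case False
          hence "card (phi ` S) \<noteq> card S" using inj_on_iff_eq_card[OF fS] by blast
          hence "card (phi ` S) < card S" using card_image_le[OF fS, of phi] by linarith
          thus ?thesis using le S by simp
        next
          case True
          hence dep: "\<not> independent (phi ` S)" using bad by blast
          have cS: "card (phi ` S) = CARD('d)" using True S card_image by fastforce
          show ?thesis
          proof (rule ccontr)
            assume "\<not> dim (phi ` S) < CARD('d)"
            hence "card (phi ` S) = dim (phi ` S)" using le cS by simp
            hence "independent (phi ` S)"
              using card_eq_dim[of "phi ` S" "phi ` S"] fS by (auto intro: span_base)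
            thus False using dep by blast
          qed
        qed
        moreover have "card ({..<n} - S) \<le> CARD('d) - 2"
          using S nE by (simp add: card_Diff_subset fS)
        ultimately show False
          using key[OF d2 hyp pr oc, of S "{..<n} - S"] by auto
      qed
    qed
  qed
qed

end
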